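(* Let $q_1,q_2$ be piecewise continuous on $[a,b]$, and let $a,b$ be consecutive zeros of a solution $u$ of $u''+q_1(t)u=0$. Suppose $J\subset[a,b]$ is an interval such that $q_1(t)\le q_2(t)$ for all $t\in[a,b]\setminus J$ and $q_1(t)>q_2(t)$ for all $t\in J$. Then every solution $v$ of $v''+q_2(t)v=0$ has at most one zero in $J$.
   Context: "Solution" always means a nontrivial (not identically zero) solution. *)

theory Defs
  imports "HOL-Analysis.Analysis"
begin

definition piecewise_continuous_on :: "real \<Rightarrow> real \<Rightarrow> (real \<Rightarrow> real) \<Rightarrow> bool" where
  "piecewise_continuous_on a b q \<longleftrightarrow>
     (\<exists>S. finite S \<and> continuous_on ({a..b} - S) q \<and>
        (\<forall>s\<in>S. (a < s \<longrightarrow> (\<exists>l. (q \<longlongrightarrow> l) (at_left s))) \<and>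
                (s < b \<longrightarrow> (\<exists>l. (q \<longlongrightarrow> l) (at_right s)))))"

definition is_solution :: "(real \<Rightarrow> real) \<Rightarrow> real \<Rightarrow> real \<Rightarrow> (real \<Rightarrow> real) \<Rightarrow> bool" where
  "is_solution q a b u \<longleftrightarrow>
     (\<exists>u'. (\<forall>t\<in>{a..b}. (u has_real_derivative u' t) (at t within {a..b})) \<and>
           continuous_on {a..b} u' \<and>
           (\<exists>S. finite S \<and>
              (\<forall>t\<in>{a..b} - S. (u' has_real_derivative (- q t * u t)) (at t within {a..b})))) \<and>
     (\<exists>t\<in>{a..b}. u t \<noteq> 0)"

end

theory Submission
  imports Defs
begin

lemma deriv_int:
  fixes f :: "real \<Rightarrow> real"
  shows
  "a < x \<Longrightarrow> x < b \<Longrightarrow> (f has_field_derivative D) (at x within {a..b}) \<Longrightarrow> (f has_field_derivative D) (at x)"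
  by (simp add: at_within_Icc_at)

lemma incr_finite_aux:
  fixes f f' :: "real \<Rightarrow> real"
  assumes "finite S"
  shows "\<forall>c d. c < d \<longrightarrow> continuous_on {c..d} f \<longrightarrow>
     (\<forall>x\<in>{c<..<d} - S. (f has_field_derivative f' x) (at x) \<and> f' x > 0) \<longrightarrow> f c < f d"
  using assms
proof (induction S rule: finite_induct)
  case empty
  show ?case
  proof (intro allI impI)
    fix c d assume cd: "c < d" and co: "continuous_on {c..d} f"
      and h: "\<forall>x\<in>{c<..<d} - {}. (f has_field_derivative f' x) (at x) \<and> f' x > 0"
    show "f c < f d"
    proof (rule DERIV_pos_imp_increasing_open[OF cd _ co])
      fix x assume "c < x" "x < d"
      then have "x \<in> {c<..<d} - {}" by simp
      then show "\<exists>y. (f has_field_derivative y) (at x) \<and> y > 0" using h by blast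
    qed
  qed
next
  case (insert p S)
  show ?case
  proof (intro allI impI)
    fix c d assume cd: "c < d" and co: "continuous_on {c..d} f"
      and h: "\<forall>x\<in>{c<..<d} - insert p S. (f has_field_derivative f' x) (at x) \<and> f' x > 0"
    show "f c < f d"
    proof (cases "p \<in> {c<..<d}")
      case False
      then have "\<forall>x\<in>{c<..<d} - S. (f has_field_derivative f' x) (at x) \<and> f' x > 0" using h by blast
      then show ?thesis using insert.IH cd co by blast
    next
      case True
      then have p: "c < p" "p < d" by auto
      have co1: "continuous_on {c..p} f" using p by (intro continuous_on_subset[OF co]) auto
      have co2: "continuous_on {p..d} f" using p by (intro continuous_on_subset[OF co]) auto
      have h1: "\<forall>x\<in>{c<..<p} - S. (f has_field_derivative f' x) (at x) \<and> f' x > 0" using h p by auto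
      have h2: "\<forall>x\<in>{p<..<d} - S. (f has_field_derivative f' x) (at x) \<and> f' x > 0" using h p by auto
      have "f c < f p" using insert.IH p(1) co1 h1 by blast
      moreover have "f p < f d" using insert.IH p(2) co2 h2 by blast
      ultimately show ?thesis by simp
    qed
  qed
qed

lemma incr_finite:
  fixes f f' :: "real \<Rightarrow> real"
  assumes "finite S" "c < d" "continuous_on {c..d} f"
     "\<forall>x\<in>{c<..<d} - S. (f has_field_derivative f' x) (at x) \<and> f' x > 0"
  shows "f c < f d"
  using incr_finite_aux[OF assms(1)] assms(2-4) by blast

lemma sign_const:
  fixes f :: "real \<Rightarrow> real"
  assumes "continuous_on {c..d} f" "\<forall>y\<in>{c<..<d}. f y \<noteq> 0" "x \<in> {c<..<d}" "f x > 0" "y \<in> {c<..<d}"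
  shows "f y > 0"
proof (rule ccontr)
  assume "\<not> f y > 0"
  with assms have neg: "f y < 0" by force
  show False
  proof (cases "y < x")
    case True
    have "continuous_on {y..x} f" using assms True by (auto intro: continuous_on_subset)
    then obtain z where "z \<ge> y" "z \<le> x" "f z = 0"
      using IVT'[of f y 0 x] neg assms True by auto
    then show False using assms neg by (metis greaterThanLessThan_iff less_eq_real_def not_less_iff_gr_or_eq order.strict_trans1 order.strict_trans2)
  next
    case False
    then have "x < y" using neg assms(4) by (cases "x = y") auto
    have "continuous_on {x..y} f" using assms \<open>x<y\<close> by (auto intro: continuous_on_subset)
    then obtain z where "z \<ge> x" "z \<le> y" "f z = 0"
      using IVT2'[of f y 0 x] neg assms \<open>x<y\<close> by auto
    then show False using assms neg by (metis greaterThanLessThan_iff less_eq_real_def not_less_iff_gr_or_eq order.strict_trans1 order.strict_trans2)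
  qed
qed

lemma sign_exists:
  fixes f :: "real \<Rightarrow> real"
  assumes "c < d" "continuous_on {c..d} f" "\<forall>y\<in>{c<..<d}. f y \<noteq> 0"
  shows "\<exists>\<sigma>::real. (\<sigma> = 1 \<or> \<sigma> = -1) \<and> (\<forall>y\<in>{c<..<d}. \<sigma> * f y > 0)"
proof -
  define m where "m = (c+d)/2"
  have m: "m \<in> {c<..<d}" using assms unfolding m_def by auto
  show ?thesis
  proof (cases "f m > 0")
    case True
    then show ?thesis using sign_const[OF assms(2,3) m] by (intro exI[of _ 1]) auto
  next
    case False
    then have "- f m > 0" using assms m by force
    moreover have "continuous_on {c..d} (\<lambda>x. - f x)" using assms by (intro continuous_intros)
    ultimately show ?thesis using sign_const[of c d "\<lambda>x. - f x", OF _ _ m] assms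
      by (intro exI[of _ "-1"]) auto
  qed
qed

lemma mvt_bound:
  fixes f f' :: "real \<Rightarrow> real"
  assumes "continuous_on {min x y..max x y} f"
    "\<forall>z. min x y < z \<and> z < max x y \<longrightarrow> (f has_field_derivative f' z) (at z) \<and> \<bar>f' z\<bar> \<le> B"
  shows "\<bar>f y - f x\<bar> \<le> B * \<bar>y - x\<bar>"
proof (cases "x = y")
  case True then show ?thesis by simp
next
  case False
  define c where "c = min x y"
  define d where "d = max x y"
  have cd: "c < d" using False unfolding c_def d_def by auto
  obtain l z where z: "c < z" "z < d" "(f has_real_derivative l) (at z)" "f d - f c = (d - c) * l"
    using MVT[OF cd, of f] assms unfolding c_def[symmetric] d_def[symmetric]
    by (metis real_differentiable_def)
  have "l = f' z" using z assms unfolding c_def[symmetric] d_def[symmetric] by (meson DERIV_unique)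
  then have "\<bar>l\<bar> \<le> B" using z assms unfolding c_def[symmetric] d_def[symmetric] by auto
  have "\<bar>f y - f x\<bar> = \<bar>f d - f c\<bar>" unfolding c_def d_def by (cases "x \<le> y") auto
  also have "\<dots> = (d - c) * \<bar>l\<bar>" using z cd by (simp add: abs_mult)
  also have "\<dots> \<le> (d - c) * B" using \<open>\<bar>l\<bar> \<le> B\<close> cd by (intro mult_left_mono) auto
  also have "d - c = \<bar>y - x\<bar>" unfolding c_def d_def by auto
  finally show ?thesis by (simp add: mult.commute)
qed

lemma core:
  fixes u u' v v' q1 q2 :: "real \<Rightarrow> real"
  assumes cd: "c < d" and S: "finite S"
    and cont: "continuous_on {c..d} u" "continuous_on {c..d} v" "continuous_on {c..d} u'" "continuous_on {c..d} v'"
    and der: "\<forall>x\<in>{c<..<d}-S. (u has_real_derivative u' x) (at x) \<and> (v has_real_derivative v' x) (at x) \<and>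
       (u' has_real_derivative (-q1 x * u x)) (at x) \<and> (v' has_real_derivative (-q2 x * v x)) (at x)"
    and dc: "(v has_real_derivative v' c) (at c within {c..d})"
    and dd: "(v has_real_derivative v' d) (at d within {c..d})"
    and v0: "v c = 0" "v d = 0" and vpos: "\<forall>x\<in>{c<..<d}. v x > 0"
    and unn: "\<forall>x\<in>{c..d}. u x \<ge> 0" and upos: "\<forall>x\<in>{c<..<d}. u x > 0"
    and q: "\<forall>x\<in>{c<..<d}. q1 x > q2 x"
  shows False
proof -
  define W where "W x = u x * v' x - u' x * v x" for x
  have Wc: "continuous_on {c..d} W" unfolding W_def using cont by (intro continuous_intros)
  have "W c < W d"
  proof (rule incr_finite[OF S cd Wc, of "\<lambda>x. (q1 x - q2 x) * u x * v x"], intro ballI conjI)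
    fix x assume x: "x \<in> {c<..<d} - S"
    then have "(W has_real_derivative (u' x * v' x + u x * (-q2 x * v x)) - ((-q1 x * u x) * v x + u' x * v' x)) (at x)"
      unfolding W_def using der by (auto intro!: derivative_eq_intros)
    then show "(W has_real_derivative (q1 x - q2 x) * u x * v x) (at x)"
      by (rule DERIV_cong) (simp add: algebra_simps)
    show "(q1 x - q2 x) * u x * v x > 0" using x q upos vpos by auto
  qed
  have lc: "v' c \<ge> 0"
  proof -
    have "((\<lambda>y. (v y - v c) / (y - c)) \<longlongrightarrow> v' c) (at_right c)"
      using dc unfolding has_field_derivative_iff at_within_Icc_at_right[OF cd] .
    moreover have "eventually (\<lambda>y. 0 \<le> (v y - v c) / (y - c)) (at_right c)"
      unfolding eventually_at_right_field using cd vpos v0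
      by (intro exI[of _ d]) (auto intro!: divide_nonneg_pos less_imp_le)
    ultimately show ?thesis by (rule tendsto_lowerbound) simp
  qed
  have ld: "v' d \<le> 0"
  proof -
    have "((\<lambda>y. (v y - v d) / (y - d)) \<longlongrightarrow> v' d) (at_left d)"
      using dd unfolding has_field_derivative_iff at_within_Icc_at_left[OF cd] .
    moreover have "eventually (\<lambda>y. 0 \<ge> (v y - v d) / (y - d)) (at_left d)"
      unfolding eventually_at_left_field using cd vpos v0
      by (intro exI[of _ c]) (auto intro!: divide_pos_neg less_imp_le)
    ultimately show ?thesis by (rule tendsto_upperbound) simp
  qed
  have "W c \<ge> 0" unfolding W_def using v0 lc unn cd by auto
  moreover have "W d \<le> 0" unfolding W_def using v0 ld unn cd by (auto intro: mult_nonneg_nonpos)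
  ultimately show False using \<open>W c < W d\<close> by simp
qed

lemma pc_bound:
  fixes q :: "real \<Rightarrow> real"
  assumes pc: "piecewise_continuous_on a b q" and S: "finite S" and x0: "x0 \<in> {a..b}"
  shows "\<exists>M e. M \<ge> 0 \<and> e > 0 \<and> (\<forall>y\<in>{a..b}. y \<noteq> x0 \<and> \<bar>y - x0\<bar> < e \<longrightarrow> \<bar>q y\<bar> \<le> M \<and> y \<notin> S)"
proof -
  obtain T where T: "finite T" "continuous_on ({a..b} - T) q"
    "\<forall>s\<in>T. (a < s \<longrightarrow> (\<exists>l. (q \<longlongrightarrow> l) (at_left s))) \<and> (s < b \<longrightarrow> (\<exists>l. (q \<longlongrightarrow> l) (at_right s)))"
    using pc unfolding piecewise_continuous_on_def by blast
  obtain e0 where e0: "e0 > 0" "\<forall>x\<in>S \<union> T. x \<noteq> x0 \<longrightarrow> e0 \<le> dist x0 x"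
    using finite_set_avoid[of "S \<union> T" x0] S T by auto
  have avoid: "y \<notin> S \<and> y \<notin> T" if "y \<noteq> x0" "\<bar>y - x0\<bar> < e0" for y
    using e0 that by (auto simp: dist_real_def)
  show ?thesis
  proof (cases "x0 \<in> T")
    case False
    then have "continuous (at x0 within ({a..b}-T)) q"
      using T(2) x0 continuous_on_eq_continuous_within by blast
    then have "(q \<longlongrightarrow> q x0) (at x0 within ({a..b}-T))" by (simp add: continuous_within)
    then have "eventually (\<lambda>y. dist (q y) (q x0) < 1) (at x0 within ({a..b}-T))"
      by (rule tendstoD) simp
    then obtain d where d: "d > 0" "\<forall>y\<in>{a..b}-T. y \<noteq> x0 \<and> dist y x0 < d \<longrightarrow> dist (q y) (q x0) < 1"
      by (auto simp: eventually_at)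
    show ?thesis
    proof (intro exI conjI ballI impI)
      show "0 \<le> \<bar>q x0\<bar> + 1" by simp
      show "0 < min d e0" using d e0 by simp
      fix y assume y: "y \<in> {a..b}" "y \<noteq> x0 \<and> \<bar>y - x0\<bar> < min d e0"
      then have "y \<notin> S \<and> y \<notin> T" using avoid by auto
      then have "dist (q y) (q x0) < 1" using d y by (auto simp: dist_real_def)
      then show "\<bar>q y\<bar> \<le> \<bar>q x0\<bar> + 1" by (auto simp: dist_real_def)
      show "y \<notin> S" using \<open>y \<notin> S \<and> y \<notin> T\<close> by simp
    qed
  next
    case True
    have R: "\<exists>eR>0. \<exists>BR. \<forall>y\<in>{a..b}. x0 < y \<and> y < x0 + eR \<longrightarrow> \<bar>q y\<bar> \<le> BR"
    proof (cases "x0 < b")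
      case True
      then obtain l where "(q \<longlongrightarrow> l) (at_right x0)" using T(3) \<open>x0 \<in> T\<close> by blast
      then have "eventually (\<lambda>y. dist (q y) l < 1) (at_right x0)" by (rule tendstoD) simp
      then obtain b' where "b' > x0" "\<forall>y>x0. y < b' \<longrightarrow> dist (q y) l < 1"
        unfolding eventually_at_right_field by blast
      then show ?thesis
        by (intro exI[of _ "b' - x0"] conjI exI[of _ "\<bar>l\<bar> + 1"]) (auto simp: dist_real_def)
    next
      case False
      then show ?thesis using x0 by (intro exI[of _ 1]) auto
    qed
    have L: "\<exists>eL>0. \<exists>BL. \<forall>y\<in>{a..b}. x0 - eL < y \<and> y < x0 \<longrightarrow> \<bar>q y\<bar> \<le> BL"
    proof (cases "a < x0")
      case True
      then obtain l where "(q \<longlongrightarrow> l) (at_left x0)" using T(3) \<open>x0 \<in> T\<close> by blast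
      then have "eventually (\<lambda>y. dist (q y) l < 1) (at_left x0)" by (rule tendstoD) simp
      then obtain b' where "b' < x0" "\<forall>y>b'. y < x0 \<longrightarrow> dist (q y) l < 1"
        unfolding eventually_at_left_field by blast
      then show ?thesis
        by (intro exI[of _ "x0 - b'"] conjI exI[of _ "\<bar>l\<bar> + 1"]) (auto simp: dist_real_def)
    next
      case False
      then show ?thesis using x0 by (intro exI[of _ 1]) auto
    qed
    obtain eR BR where eR: "eR > 0" "\<forall>y\<in>{a..b}. x0 < y \<and> y < x0 + eR \<longrightarrow> \<bar>q y\<bar> \<le> BR" using R by blast
    obtain eL BL where eL: "eL > 0" "\<forall>y\<in>{a..b}. x0 - eL < y \<and> y < x0 \<longrightarrow> \<bar>q y\<bar> \<le> BL" using L by blast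
    show ?thesis
    proof (intro exI conjI ballI impI)
      show "0 \<le> max 0 (max BR BL)" by simp
      show "0 < min e0 (min eR eL)" using e0 eR eL by simp
      fix y assume y: "y \<in> {a..b}" "y \<noteq> x0 \<and> \<bar>y - x0\<bar> < min e0 (min eR eL)"
      then show "y \<notin> S" using avoid by auto
      show "\<bar>q y\<bar> \<le> max 0 (max BR BL)"
      proof (cases "y < x0")
        case True
        then have "\<bar>q y\<bar> \<le> BL" using eL y by auto
        then show ?thesis by simp
      next
        case False
        then have "\<bar>q y\<bar> \<le> BR" using eR y by auto
        then show ?thesis by simp
      qed
    qed
  qed
qed

lemma local_zero:
  fixes q v v' :: "real \<Rightarrow> real"
  assumes pc: "piecewise_continuous_on a b q" and S: "finite S"
    and dv: "\<forall>t\<in>{a..b}. (v has_real_derivative v' t) (at t within {a..b})"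
    and cv': "continuous_on {a..b} v'"
    and dv': "\<forall>t\<in>{a..b}-S. (v' has_real_derivative (-q t * v t)) (at t within {a..b})"
    and x0: "x0 \<in> {a..b}" and z: "v x0 = 0" "v' x0 = 0"
  shows "\<exists>r>0. \<forall>y\<in>{a..b}. \<bar>y - x0\<bar> < r \<longrightarrow> v y = 0 \<and> v' y = 0"
proof -
  obtain M e where Me: "M \<ge> 0" "e > 0" "\<forall>y\<in>{a..b}. y \<noteq> x0 \<and> \<bar>y - x0\<bar> < e \<longrightarrow> \<bar>q y\<bar> \<le> M \<and> y \<notin> S"
    using pc_bound[OF pc S x0] by blast
  define r where "r = min (e/2) (1/(2*(1+M)))"
  have r: "r > 0" "r \<le> e/2" "(1+M) * r \<le> 1/2"
    using Me unfolding r_def by (auto simp: min_def field_simps)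
  define I where "I = {max a (x0-r) .. min b (x0+r)}"
  have x0I: "x0 \<in> I" using x0 r unfolding I_def by auto
  have Isub: "I \<subseteq> {a..b}" unfolding I_def by auto
  have cv: "continuous_on {a..b} v" using dv by (intro DERIV_continuous_on) auto
  define g where "g y = \<bar>v y\<bar> + \<bar>v' y\<bar>" for y
  have cg: "continuous_on I g" unfolding g_def using cv cv' Isub
    by (intro continuous_intros) (auto intro: continuous_on_subset)
  obtain ym where ym: "ym \<in> I" "\<forall>y\<in>I. g y \<le> g ym"
    using continuous_attains_sup[OF compact_Icc _ cg[unfolded I_def]] x0I unfolding I_def by blast
  define K where "K = g ym"
  have bnd: "g y \<le> K / 2" if y: "y \<in> I" for y
  proof -
    have zfacts: "z \<in> I \<and> a < z \<and> z < b \<and> z \<notin> S \<and> \<bar>q z\<bar> \<le> M"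
      if zz: "min y x0 < z" "z < max y x0" for z
    proof -
      have "z \<in> I" using zz y x0I unfolding I_def by auto
      moreover have "a < z \<and> z < b"
      proof -
        have "y \<in> {a..b}" "x0 \<in> {a..b}" using y x0I Isub by auto
        then show ?thesis using zz by (auto simp: min_def max_def split: if_splits)
      qed
      moreover have "z \<noteq> x0" using zz by auto
      moreover have "\<bar>z - x0\<bar> < e" using zz y r unfolding I_def by auto
      ultimately show ?thesis using Me by auto
    qed
    have sub: "{min x0 y..max x0 y} \<subseteq> {a..b}" using y x0I Isub by auto
    have "\<bar>v y - v x0\<bar> \<le> K * \<bar>y - x0\<bar>"
    proof (rule mvt_bound)
      show "continuous_on {min x0 y..max x0 y} v" using cv sub by (rule continuous_on_subset)
      show "\<forall>z. min x0 y < z \<and> z < max x0 y \<longrightarrow> (v has_real_derivative v' z) (at z) \<and> \<bar>v' z\<bar> \<le> K"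
      proof (intro allI impI conjI)
        fix z assume "min x0 y < z \<and> z < max x0 y"
        then have zf: "z \<in> I \<and> a < z \<and> z < b \<and> z \<notin> S \<and> \<bar>q z\<bar> \<le> M" using zfacts by (auto simp: min.commute max.commute)
        then show "(v has_real_derivative v' z) (at z)" using dv deriv_int by auto
        show "\<bar>v' z\<bar> \<le> K" using ym zf unfolding K_def g_def by force
      qed
    qed
    moreover have "\<bar>v' y - v' x0\<bar> \<le> (M * K) * \<bar>y - x0\<bar>"
    proof (rule mvt_bound)
      show "continuous_on {min x0 y..max x0 y} v'" using cv' sub by (rule continuous_on_subset)
      show "\<forall>z. min x0 y < z \<and> z < max x0 y \<longrightarrow> (v' has_real_derivative (- q z * v z)) (at z) \<and> \<bar>- q z * v z\<bar> \<le> M * K"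
      proof (intro allI impI conjI)
        fix z assume "min x0 y < z \<and> z < max x0 y"
        then have zf: "z \<in> I \<and> a < z \<and> z < b \<and> z \<notin> S \<and> \<bar>q z\<bar> \<le> M" using zfacts by (auto simp: min.commute max.commute)
        then show "(v' has_real_derivative (- q z * v z)) (at z)" using dv' deriv_int by auto
        have "\<bar>v z\<bar> \<le> K" using ym zf unfolding K_def g_def by force
        then show "\<bar>- q z * v z\<bar> \<le> M * K" using zf Me(1) by (simp add: abs_mult mult_mono')
      qed
    qed
    moreover have "\<bar>y - x0\<bar> \<le> r" using y unfolding I_def by auto
    moreover have "K \<ge> 0" unfolding K_def g_def by simp
    ultimately have A: "\<bar>v y\<bar> \<le> K * \<bar>y - x0\<bar>" and B: "\<bar>v' y\<bar> \<le> (M * K) * \<bar>y - x0\<bar>"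
      and C: "\<bar>y - x0\<bar> \<le> r" and K0: "K \<ge> 0" using z by auto
    have "K * \<bar>y - x0\<bar> \<le> K * r" using C K0 by (rule mult_left_mono)
    moreover have "(M * K) * \<bar>y - x0\<bar> \<le> (M * K) * r" using C K0 Me(1) by (intro mult_left_mono) auto
    ultimately have "g y \<le> K * r + (M * K) * r" unfolding g_def using A B by linarith
    also have "\<dots> = K * ((1 + M) * r)" by (simp add: algebra_simps)
    also have "\<dots> \<le> K * (1/2)" using r \<open>K \<ge> 0\<close> by (intro mult_left_mono) auto
    finally show ?thesis by simp
  qed
  have "K \<le> 0" using bnd[OF ym(1)] unfolding K_def by simp
  then have "\<forall>y\<in>I. g y \<le> 0" using ym unfolding K_def by force
  then have "\<forall>y\<in>I. v y = 0 \<and> v' y = 0" unfolding g_def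
  proof (intro ballI)
    fix y assume "\<forall>y\<in>I. \<bar>v y\<bar> + \<bar>v' y\<bar> \<le> 0" "y \<in> I"
    then have "\<bar>v y\<bar> + \<bar>v' y\<bar> \<le> 0" by blast
    then have "\<bar>v y\<bar> \<le> 0" "\<bar>v' y\<bar> \<le> 0" using abs_ge_zero[of "v y"] abs_ge_zero[of "v' y"] by linarith+
    then show "v y = 0 \<and> v' y = 0" by simp
  qed
  then show ?thesis
  proof (intro exI[of _ r] conjI ballI impI)
    fix y assume h: "\<forall>y\<in>I. v y = 0 \<and> v' y = 0" "y \<in> {a..b}" "\<bar>y - x0\<bar> < r"
    then have "x0 - r \<le> y" "y \<le> x0 + r" using abs_ge_self[of "y - x0"] abs_ge_minus_self[of "y - x0"] by linarith+
    then have "y \<in> I" using h(2) unfolding I_def by simp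
    then show "v y = 0" "v' y = 0" using h(1) by auto
  qed (use r in auto)
qed

lemma uniq:
  fixes q v v' :: "real \<Rightarrow> real"
  assumes pc: "piecewise_continuous_on a b q" and S: "finite S"
    and dv: "\<forall>t\<in>{a..b}. (v has_real_derivative v' t) (at t within {a..b})"
    and cv': "continuous_on {a..b} v'"
    and dv': "\<forall>t\<in>{a..b}-S. (v' has_real_derivative (-q t * v t)) (at t within {a..b})"
    and x0: "x0 \<in> {a..b}" and z: "v x0 = 0" "v' x0 = 0"
  shows "\<forall>x\<in>{a..b}. v x = 0"
proof -
  define Z where "Z = {x\<in>{a..b}. (\<lambda>x. (v x, v' x)) x = (0,0)}"
  have cv: "continuous_on {a..b} v" using dv by (intro DERIV_continuous_on) auto
  have "closedin (top_of_set {a..b}) Z" unfolding Z_def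
    by (rule continuous_closedin_preimage_constant) (intro continuous_intros cv cv')
  moreover have "openin (top_of_set {a..b}) Z"
    unfolding openin_euclidean_subtopology_iff
  proof (intro conjI ballI)
    show "Z \<subseteq> {a..b}" unfolding Z_def by auto
    fix x assume "x \<in> Z"
    then have "x \<in> {a..b}" "v x = 0" "v' x = 0" unfolding Z_def by auto
    from local_zero[OF pc S dv cv' dv' this] obtain r where
      "r > 0" "\<forall>y\<in>{a..b}. \<bar>y - x\<bar> < r \<longrightarrow> v y = 0 \<and> v' y = 0" by blast
    then show "\<exists>e>0. \<forall>x'\<in>{a..b}. dist x' x < e \<longrightarrow> x' \<in> Z"
      unfolding Z_def by (intro exI[of _ r]) (auto simp: dist_real_def)
  qed
  moreover have "x0 \<in> Z" using x0 z unfolding Z_def by auto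
  moreover have "connected {a..b}" by (rule connected_Icc)
  ultimately have "Z = {a..b}" unfolding connected_clopen by blast
  then show ?thesis unfolding Z_def by auto
qed

lemma main_lt:
  fixes q1 q2 u v :: "real \<Rightarrow> real" and a b :: real and J :: "real set"
  assumes "a < b"
    and pc1: "piecewise_continuous_on a b q1" and pc2: "piecewise_continuous_on a b q2"
    and usol: "is_solution q1 a b u"
    and ua: "u a = 0" and ub: "u b = 0" and unz: "\<forall>t\<in>{a<..<b}. u t \<noteq> 0"
    and J: "is_interval J" and Jsub: "J \<subseteq> {a..b}"
    and qJ: "\<forall>t\<in>J. q1 t > q2 t"
    and vsol: "is_solution q2 a b v"
    and st: "s \<in> J" "t \<in> J" "s < t" "v s = 0" "v t = 0"
  shows False
proof -
  obtain u' S1 where du: "\<forall>t\<in>{a..b}. (u has_real_derivative u' t) (at t within {a..b})"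
    and cu': "continuous_on {a..b} u'" and S1: "finite S1"
    and du': "\<forall>t\<in>{a..b} - S1. (u' has_real_derivative (- q1 t * u t)) (at t within {a..b})"
    using usol unfolding is_solution_def by blast
  obtain v' S2 where dv: "\<forall>t\<in>{a..b}. (v has_real_derivative v' t) (at t within {a..b})"
    and cv': "continuous_on {a..b} v'" and S2: "finite S2"
    and dv': "\<forall>t\<in>{a..b} - S2. (v' has_real_derivative (- q2 t * v t)) (at t within {a..b})"
    using vsol unfolding is_solution_def by blast
  obtain x1 where x1: "x1 \<in> {a..b}" "v x1 \<noteq> 0" using vsol unfolding is_solution_def by blast
  have cu: "continuous_on {a..b} u" using du by (intro DERIV_continuous_on) auto
  have cv: "continuous_on {a..b} v" using dv by (intro DERIV_continuous_on) auto
  have stJ: "{s..t} \<subseteq> J"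
  proof
    fix y assume "y \<in> {s..t}"
    then show "y \<in> J" using mem_is_interval_1_I[OF J st(1) st(2)] by simp
  qed
  have stab: "{s..t} \<subseteq> {a..b}" by (rule order_trans[OF stJ Jsub])
  show False
  proof (cases "\<exists>x\<in>{s<..<t}. v x \<noteq> 0")
    case True
    then obtain x where x: "x \<in> {s<..<t}" "v x \<noteq> 0" by blast
    define Z1 where "Z1 = {y\<in>{s..x}. v y = 0}"
    define Z2 where "Z2 = {y\<in>{x..t}. v y = 0}"
    define c where "c = Sup Z1"
    define d where "d = Inf Z2"
    have sx: "{s..x} \<subseteq> {a..b}" "{x..t} \<subseteq> {a..b}" using stab x by auto
    have cZ1: "closed Z1" unfolding Z1_def
      by (rule continuous_closed_preimage_constant) (auto intro: continuous_on_subset[OF cv sx(1)])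
    have cZ2: "closed Z2" unfolding Z2_def
      by (rule continuous_closed_preimage_constant) (auto intro: continuous_on_subset[OF cv sx(2)])
    have Z1ne: "s \<in> Z1" using st x unfolding Z1_def by auto
    have Z2ne: "t \<in> Z2" using st x unfolding Z2_def by auto
    have bZ1: "bdd_above Z1" unfolding Z1_def by (rule bdd_aboveI[of _ x]) auto
    have bZ2: "bdd_below Z2" unfolding Z2_def by (rule bdd_belowI[of _ x]) auto
    have cin: "c \<in> Z1" unfolding c_def using closed_contains_Sup[OF _ bZ1 cZ1] Z1ne by auto
    have din: "d \<in> Z2" unfolding d_def using closed_contains_Inf[OF _ bZ2 cZ2] Z2ne by auto
    have cx: "s \<le> c" "c < x" "v c = 0" using cin x unfolding Z1_def
      by auto (metis order.not_eq_order_implies_strict)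
    have dx: "x < d" "d \<le> t" "v d = 0" using din x unfolding Z2_def
      by auto (metis order.not_eq_order_implies_strict)
    have cd: "c < d" using cx dx by simp
    have nz: "\<forall>y\<in>{c<..<d}. v y \<noteq> 0"
    proof (intro ballI notI)
      fix y assume y: "y \<in> {c<..<d}" "v y = 0"
      show False
      proof (cases "y \<le> x")
        case True
        then have "y \<in> Z1" using y cx unfolding Z1_def by auto
        then have "y \<le> c" unfolding c_def using bZ1 by (rule cSup_upper)
        then show False using y by simp
      next
        case False
        then have "y \<in> Z2" using y dx unfolding Z2_def by auto
        then have "d \<le> y" unfolding d_def using bZ2 by (rule cInf_lower)
        then show False using y by simp
      qed
    qed
    have cdab: "{c..d} \<subseteq> {a..b}" "{c..d} \<subseteq> J" using cx dx stab stJ by auto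
    obtain \<sigma>v where sv: "\<sigma>v = 1 \<or> \<sigma>v = -1" "\<forall>y\<in>{c<..<d}. \<sigma>v * v y > 0"
      using sign_exists[OF cd continuous_on_subset[OF cv cdab(1)] nz] by blast
    obtain \<sigma>u where su: "\<sigma>u = 1 \<or> \<sigma>u = -1" "\<forall>y\<in>{a<..<b}. \<sigma>u * u y > 0"
      using sign_exists[OF \<open>a < b\<close> cu unz] by blast
    show False
    proof (rule core[OF cd, of "S1 \<union> S2" "\<lambda>x. \<sigma>u * u x" "\<lambda>x. \<sigma>v * v x" "\<lambda>x. \<sigma>u * u' x" "\<lambda>x. \<sigma>v * v' x" q1 q2])
      show "finite (S1 \<union> S2)" using S1 S2 by simp
      show "continuous_on {c..d} (\<lambda>x. \<sigma>u * u x)" using continuous_on_subset[OF cu cdab(1)] by (intro continuous_intros)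
      show "continuous_on {c..d} (\<lambda>x. \<sigma>v * v x)" using continuous_on_subset[OF cv cdab(1)] by (intro continuous_intros)
      show "continuous_on {c..d} (\<lambda>x. \<sigma>u * u' x)" using continuous_on_subset[OF cu' cdab(1)] by (intro continuous_intros)
      show "continuous_on {c..d} (\<lambda>x. \<sigma>v * v' x)" using continuous_on_subset[OF cv' cdab(1)] by (intro continuous_intros)
      show "\<forall>x\<in>{c<..<d} - (S1 \<union> S2).
        ((\<lambda>x. \<sigma>u * u x) has_real_derivative \<sigma>u * u' x) (at x) \<and>
        ((\<lambda>x. \<sigma>v * v x) has_real_derivative \<sigma>v * v' x) (at x) \<and>
        ((\<lambda>x. \<sigma>u * u' x) has_real_derivative - q1 x * (\<sigma>u * u x)) (at x) \<and>
        ((\<lambda>x. \<sigma>v * v' x) has_real_derivative - q2 x * (\<sigma>v * v x)) (at x)"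
      proof (intro ballI conjI)
        fix y assume y: "y \<in> {c<..<d} - (S1 \<union> S2)"
        then have ya: "a < y" "y < b" "y \<in> {a..b}" using cdab by auto
        have d1: "(u has_real_derivative u' y) (at y)" using du ya deriv_int by blast
        have d2: "(v has_real_derivative v' y) (at y)" using dv ya deriv_int by blast
        have d3: "(u' has_real_derivative (- q1 y * u y)) (at y)" using du' ya y deriv_int by blast
        have d4: "(v' has_real_derivative (- q2 y * v y)) (at y)" using dv' ya y deriv_int by blast
        show "((\<lambda>x. \<sigma>u * u x) has_real_derivative \<sigma>u * u' y) (at y)" using DERIV_cmult[OF d1] .
        show "((\<lambda>x. \<sigma>v * v x) has_real_derivative \<sigma>v * v' y) (at y)" using DERIV_cmult[OF d2] .
        show "((\<lambda>x. \<sigma>u * u' x) has_real_derivative - q1 y * (\<sigma>u * u y)) (at y)"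
          using DERIV_cmult[OF d3, of \<sigma>u] by (rule DERIV_cong) (simp add: algebra_simps)
        show "((\<lambda>x. \<sigma>v * v' x) has_real_derivative - q2 y * (\<sigma>v * v y)) (at y)"
          using DERIV_cmult[OF d4, of \<sigma>v] by (rule DERIV_cong) (simp add: algebra_simps)
      qed
      have "c \<in> {a..b}" "d \<in> {a..b}" using cdab cd by auto
      then have "(v has_real_derivative v' c) (at c within {c..d})" "(v has_real_derivative v' d) (at d within {c..d})"
        using has_field_derivative_subset[OF dv[rule_format] cdab(1)] by auto
      then show "((\<lambda>x. \<sigma>v * v x) has_real_derivative \<sigma>v * v' c) (at c within {c..d})"
        "((\<lambda>x. \<sigma>v * v x) has_real_derivative \<sigma>v * v' d) (at d within {c..d})"
        by (auto intro: DERIV_cmult)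
      show "\<sigma>v * v c = 0" "\<sigma>v * v d = 0" using cx dx by auto
      show "\<forall>x\<in>{c<..<d}. 0 < \<sigma>v * v x" using sv by blast
      show "\<forall>x\<in>{c..d}. 0 \<le> \<sigma>u * u x"
      proof
        fix y assume "y \<in> {c..d}"
        then have "y \<in> {a..b}" using cdab by auto
        then have "y = a \<or> y = b \<or> y \<in> {a<..<b}" by auto
        then show "0 \<le> \<sigma>u * u y" using su ua ub by (auto intro: less_imp_le)
      qed
      show "\<forall>x\<in>{c<..<d}. 0 < \<sigma>u * u x" using su cdab by auto
      show "\<forall>x\<in>{c<..<d}. q2 x < q1 x"
      proof
        fix y assume "y \<in> {c<..<d}"
        then have "y \<in> J" using cdab(2) by auto
        then show "q2 y < q1 y" using qJ by blast
      qed
    qed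
  next
    case False
    then have vz: "\<forall>x\<in>{s<..<t}. v x = 0" by blast
    define m where "m = (s+t)/2"
    have m: "s < m" "m < t" using st unfolding m_def by auto
    have mab: "a < m" "m < b" "m \<in> {a..b}" using m stab st by auto
    have "(v has_real_derivative v' m) (at m)" using dv mab deriv_int by blast
    moreover have "\<forall>y. \<bar>m - y\<bar> < (t-s)/2 \<longrightarrow> v m = v y"
    proof (intro allI impI)
      fix y assume "\<bar>m - y\<bar> < (t-s)/2"
      then have "m - y < (t-s)/2" "y - m < (t-s)/2" using abs_ge_self[of "m - y"] abs_ge_minus_self[of "m - y"] by linarith+
      then have "y \<in> {s<..<t}" unfolding m_def by (simp add: field_simps)
      moreover have "m \<in> {s<..<t}" using m by auto
      ultimately show "v m = v y" using vz by simp
    qed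
    moreover have "(0::real) < (t-s)/2" using st by simp
    ultimately have "v' m = 0" using DERIV_local_const[where f=v and x=m and l="v' m" and d="(t-s)/2"] by blast
    moreover have "v m = 0" using vz m by auto
    ultimately have "\<forall>x\<in>{a..b}. v x = 0" using uniq[OF pc2 S2 dv cv' dv' mab(3)] by blast
    then show False using x1 by blast
  qed
qed

theorem lemma1:
  fixes q1 q2 u :: "real \<Rightarrow> real" and a b :: real and J :: "real set"
  assumes "a < b"
    and "piecewise_continuous_on a b q1" and "piecewise_continuous_on a b q2"
    and "is_solution q1 a b u"
    and "u a = 0" and "u b = 0" and "\<forall>t\<in>{a<..<b}. u t \<noteq> 0"
    and "is_interval J" and "J \<subseteq> {a..b}"
    and "\<forall>t\<in>{a..b} - J. q1 t \<le> q2 t"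
    and "\<forall>t\<in>J. q1 t > q2 t"
  shows "\<forall>v. is_solution q2 a b v \<longrightarrow>
           (\<forall>s\<in>J. \<forall>t\<in>J. v s = 0 \<and> v t = 0 \<longrightarrow> s = t)"
proof (intro allI impI ballI)
  fix v s t assume v: "is_solution q2 a b v" and s: "s \<in> J" and t: "t \<in> J"
    and z: "v s = 0 \<and> v t = 0"
  show "s = t"
  proof (rule ccontr)
    assume "s \<noteq> t"
    then have "s < t \<or> t < s" by auto
    then show False
    proof
      assume "s < t"
      then show False using main_lt[OF assms(1-9) assms(11) v s t] z by blast
    next
      assume "t < s"
      then show False using main_lt[OF assms(1-9) assms(11) v t s] z by blast
    qed
  qed
qed

end
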